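(* Let $Z$ be a non-negative random variable satisfying $\mathbb{E}[Z^2]=1$. Then \[ \mathbb{E}\left[Z^2\,\frac{[Z-1/2]_+^2}{(Z+1/2)^2}\right]\ge \frac{1}{53}. \]
   Context: For $x\in\mathbb{R}$, $[x]_+=\max\{0,x\}$. *)

theory Defs
  imports "HOL-Probability.Probability"
begin

definition pos_part :: "real \<Rightarrow> real" where
  "pos_part x = max 0 x"

end

theory Submission imports Defs begin
lemma poly: fixes z::real assumes "z \<ge> 0" shows "(2*z^2-1)*(z+1/2)^2 \<le> 16*z^2*(z-1/2)^2"
proof -
  have "16*z^2*(z-1/2)^2 - (2*z^2-1)*(z+1/2)^2 = 14*(z^2-9/14*z-9/196)^2 + (34/196)*z + (1/4 - 14*81/196^2)"
    by (simp add: algebra_simps power2_eq_square)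
  moreover have "0 \<le> 14*(z^2-9/14*z-9/196)^2 + (34/196)*z + (1/4 - 14*81/196^2)"
    using assms by (simp add: add_nonneg_nonneg)
  ultimately show ?thesis by linarith
qed
lemma pt: fixes z::real assumes "z \<ge> 0"
  shows "z^2/8 - 1/16 \<le> z^2*(pos_part (z-1/2))^2/(z+1/2)^2"
proof (cases "z \<ge> 1/2")
  case True
  have pp: "pos_part (z-1/2) = z-1/2" using True by (simp add: pos_part_def)
  have d: "(z+1/2)^2 > 0" using assms by simp
  have "z^2/8 - 1/16 = (2*z^2-1)*(z+1/2)^2/16/(z+1/2)^2" using d by (simp add: field_simps)
  also have "\<dots> \<le> 16*z^2*(z-1/2)^2/16/(z+1/2)^2"
    using poly[OF assms] d by (intro divide_right_mono) auto
  finally show ?thesis using pp by simp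
next
  case False
  then have "z^2 \<le> (1/2)^2" using assms by (intro power_mono) auto
  then have "z^2/8 - 1/16 \<le> 0" by (simp add: power2_eq_square)
  also have "0 \<le> z^2*(pos_part (z-1/2))^2/(z+1/2)^2" by simp
  finally show ?thesis .
qed
lemma bnd: fixes z::real
  shows "norm (z^2*(pos_part (z-1/2))^2/(z+1/2)^2) \<le> z^2"
proof (cases "z \<ge> 1/2")
  case True
  have d: "(z+1/2)^2 > 0" using True by simp
  have "(z-1/2)^2 \<le> (z+1/2)^2" using True by (intro power_mono) auto
  then have "(z-1/2)^2/(z+1/2)^2 \<le> 1" using d by simp
  then have "z^2*((z-1/2)^2/(z+1/2)^2) \<le> z^2 * 1" by (intro mult_left_mono) auto
  then show ?thesis using True by (simp add: pos_part_def)
next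
  case False
  then show ?thesis by (simp add: pos_part_def)
qed

theorem lemma2:
  fixes M :: "'a measure" and Z :: "'a \<Rightarrow> real"
  assumes "prob_space M"
    and "Z \<in> borel_measurable M"
    and "AE x in M. Z x \<ge> 0"
    and "integrable M (\<lambda>x. (Z x)\<^sup>2)"
    and "(\<integral>x. (Z x)\<^sup>2 \<partial>M) = 1"
  shows "(\<integral>x. (Z x)\<^sup>2 * (pos_part (Z x - 1/2))\<^sup>2 / (Z x + 1/2)\<^sup>2 \<partial>M) \<ge> 1/53"
proof -
  interpret prob_space M by fact
  have meas: "(\<lambda>x. (Z x)\<^sup>2 * (pos_part (Z x - 1/2))\<^sup>2 / (Z x + 1/2)\<^sup>2) \<in> borel_measurable M"
    using assms(2) unfolding pos_part_def by measurable
  have int: "integrable M (\<lambda>x. (Z x)\<^sup>2 * (pos_part (Z x - 1/2))\<^sup>2 / (Z x + 1/2)\<^sup>2)"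
    by (rule Bochner_Integration.integrable_bound[OF assms(4) meas]) (use bnd in \<open>auto\<close>)
  have int2: "integrable M (\<lambda>x. (Z x)\<^sup>2/8 - 1/16)"
    using assms(4) by auto
  have "(\<integral>x. (Z x)\<^sup>2/8 - 1/16 \<partial>M) = 1/16"
    using assms(4,5) by (simp add: prob_space)
  moreover have "(\<integral>x. (Z x)\<^sup>2/8 - 1/16 \<partial>M) \<le> (\<integral>x. (Z x)\<^sup>2 * (pos_part (Z x - 1/2))\<^sup>2 / (Z x + 1/2)\<^sup>2 \<partial>M)"
    using assms(3) by (intro integral_mono_AE int int2) (auto elim!: AE_mp intro: pt)
  ultimately show ?thesis by linarith
qed
end
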